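(* Let $\epsilon,\gamma,\mu,\nu\in\mathbb R$, $\mathbf a=[\epsilon\ \gamma]^T$, $\mathbf b=[\mu\ \nu]^T$, let $\boldsymbol\psi:\mathbb R\to\mathbb R^2$, $|\boldsymbol\psi|=\|\boldsymbol\psi(x)\|_2$, and $$\mathbf M(x)=\mathbf N_1|\boldsymbol\psi|^2+\mathbf N_2|\boldsymbol\psi|^4+(2\mathbf N_1+4\mathbf N_2|\boldsymbol\psi|^2)\boldsymbol\psi\boldsymbol\psi^T,\quad \mathbf N_1=\begin{bmatrix}\epsilon&-\gamma\\ \gamma&\epsilon\end{bmatrix},\ \mathbf N_2=\begin{bmatrix}\mu&-\nu\\ \nu&\mu\end{bmatrix}.$$ Suppose that (1) $|\boldsymbol\psi(x)|>0$ for all $x\in\mathbb R$; (2) $\mathbf a$ and $\mathbf b$ are not both $\mathbf 0$; and (3) if $\mathbf a\neq\mathbf 0$, $\mathbf b\neq\mathbf 0$ and $$r_-:=\frac{-4(\epsilon\mu+\gamma\nu)-\sqrt{16(\epsilon\mu+\gamma\nu)^2-15(\epsilon^2+\gamma^2)(\mu^2+\nu^2)}}{5(\mu^2+\nu^2)}$$ is real and positive, then $\max_{x\in\mathbb R}|\boldsymbol\psi(x)|^2<r_-$. Then $\det(\mathbf M(x))>0$ for all $x\in\mathbb R$. *)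

theory Defs
  imports "HOL-Analysis.Analysis"
begin

definition rotmat :: "real \<Rightarrow> real \<Rightarrow> real^2^2" where
  "rotmat p q = vector [vector [p, - q], vector [q, p]]"

definition Mmat :: "real \<Rightarrow> real \<Rightarrow> real \<Rightarrow> real \<Rightarrow> real^2 \<Rightarrow> real^2^2" where
  "Mmat \<epsilon> \<gamma> \<mu> \<nu> v =
     (let N1 = rotmat \<epsilon> \<gamma>; N2 = rotmat \<mu> \<nu>; r = (norm v)\<^sup>2 in
      r *\<^sub>R N1 + r\<^sup>2 *\<^sub>R N2 + (2 *\<^sub>R N1 + (4 * r) *\<^sub>R N2) ** ((columnvector v :: real^1^2) ** rowvector v))"

definition discr :: "real \<Rightarrow> real \<Rightarrow> real \<Rightarrow> real \<Rightarrow> real" where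
  "discr \<epsilon> \<gamma> \<mu> \<nu> = 16 * (\<epsilon> * \<mu> + \<gamma> * \<nu>)\<^sup>2 - 15 * (\<epsilon>\<^sup>2 + \<gamma>\<^sup>2) * (\<mu>\<^sup>2 + \<nu>\<^sup>2)"

text \<open>r_minus; only meaningful (real) when discr \<ge> 0.\<close>
definition r_minus :: "real \<Rightarrow> real \<Rightarrow> real \<Rightarrow> real \<Rightarrow> real" where
  "r_minus \<epsilon> \<gamma> \<mu> \<nu> =
     (- 4 * (\<epsilon> * \<mu> + \<gamma> * \<nu>) - sqrt (discr \<epsilon> \<gamma> \<mu> \<nu>)) / (5 * (\<mu>\<^sup>2 + \<nu>\<^sup>2))"

end

theory Submission
  imports Defs
begin

lemma nv: "(norm (v::real^2))\<^sup>2 = (v$1)\<^sup>2 + (v$2)\<^sup>2"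
  by (simp add: norm_eq_sqrt_inner inner_vec_def sum_2 power2_eq_square)

lemma detM: "det (Mmat e g m n v) = ((v$1)\<^sup>2 + (v$2)\<^sup>2)\<^sup>2 * (3*(e\<^sup>2+g\<^sup>2) + 8*((v$1)\<^sup>2 + (v$2)\<^sup>2)*(e*m+g*n) + 5*((v$1)\<^sup>2 + (v$2)\<^sup>2)\<^sup>2*(m\<^sup>2+n\<^sup>2))"
  unfolding Mmat_def rotmat_def Let_def nv
  by (simp add: det_2 matrix_matrix_mult_def columnvector_def rowvector_def sum_2 power2_eq_square algebra_simps)

lemma v0: "(vector [a,b] = (0::real^2)) = (a = 0 \<and> b = 0)"
  by (auto simp: vec_eq_iff forall_2)

lemma quad:
  fixes e g m n r :: real
  assumes r: "r > 0" and nb: "\<not> (e = 0 \<and> g = 0 \<and> m = 0 \<and> n = 0)"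
    and mc: "\<not>(e = 0 \<and> g = 0) \<and> \<not> (m = 0 \<and> n = 0) \<and> discr e g m n \<ge> 0 \<and> r_minus e g m n > 0
          \<longrightarrow> r < r_minus e g m n"
  shows "3*(e\<^sup>2+g\<^sup>2) + 8*r*(e*m+g*n) + 5*r\<^sup>2*(m\<^sup>2+n\<^sup>2) > 0"
proof -
  define E where "E = e\<^sup>2+g\<^sup>2"
  define F where "F = m\<^sup>2+n\<^sup>2"
  define S where "S = e*m+g*n"
  define D where "D = discr e g m n"
  have D: "D = 16*(S^2) - 15*E*F" unfolding D_def discr_def S_def E_def F_def by simp
  have E0: "E \<ge> 0" "F \<ge> 0" unfolding E_def F_def by auto
  have key: "5*F*(3*E + 8*r*S + 5*r\<^sup>2*F) = (5*F*r+4*S)\<^sup>2 - D"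
    unfolding D by (simp add: power2_eq_square algebra_simps)
  show ?thesis
  proof (cases "m = 0 \<and> n = 0")
    case True
    then have "E > 0" using nb unfolding E_def by (auto simp: sum_power2_gt_zero_iff)
    then show ?thesis using True unfolding E_def by simp
  next
    case mn: False
    then have F: "F > 0" unfolding F_def by (auto simp: sum_power2_gt_zero_iff)
    show ?thesis
    proof (cases "e = 0 \<and> g = 0")
      case True
      then show ?thesis using F r unfolding F_def by simp
    next
      case eg: False
      then have Ep: "E > 0" unfolding E_def by (auto simp: sum_power2_gt_zero_iff)
      have "(5*F*r+4*S)\<^sup>2 - D > 0"
      proof (cases "D \<ge> 0")
        case False then show ?thesis by (smt (verit) zero_le_power2)
      next
        case Dp: True
        have sq: "(sqrt D)\<^sup>2 = D" using Dp by simp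
        have sq0: "sqrt D \<ge> 0" using Dp by simp
        have lt: "D < (4*S)\<^sup>2" using Ep F D by (simp add: power2_eq_square)
        show ?thesis
        proof (cases "S \<ge> 0")
          case True
          have "(5*F*r+4*S)\<^sup>2 \<ge> (4*S)\<^sup>2"
            using True F r by (intro power_mono) auto
          then show ?thesis using lt by linarith
        next
          case False
          have "sqrt D < -4*S"
          proof -
            have "sqrt D < sqrt ((4*S)\<^sup>2)" using lt by (rule real_sqrt_less_mono)
            moreover have "sqrt ((4*S)\<^sup>2) = -4*S" using False by (simp only: real_sqrt_abs)
            ultimately show ?thesis by linarith
          qed
          then have rm: "r_minus e g m n > 0"
            unfolding r_minus_def D_def[symmetric] S_def[symmetric] F_def[symmetric]
            using F by (intro divide_pos_pos) auto
          then have "r < r_minus e g m n" using mc eg mn Dp D_def by auto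
          then have "r < (-4*S - sqrt D)/(5*F)"
            unfolding r_minus_def D_def[symmetric] S_def[symmetric] F_def[symmetric] .
          then have "5*F*r < -4*S - sqrt D" using F by (simp add: field_simps)
          then have "sqrt D < -(5*F*r+4*S)" by linarith
          then have "(sqrt D)\<^sup>2 < (-(5*F*r+4*S))\<^sup>2" using sq0 by (intro power_strict_mono) auto
          then show ?thesis using sq by (simp add: power2_eq_square algebra_simps)
        qed
      qed
      then have "5*F*(3*E + 8*r*S + 5*r\<^sup>2*F) > 0" using key by simp
      then have "3*E + 8*r*S + 5*r\<^sup>2*F > 0" using F by (simp add: zero_less_mult_iff)
      then show ?thesis unfolding E_def F_def S_def by (simp add: algebra_simps)
    qed
  qed
qed

theorem proposition7p7:
  fixes \<epsilon> \<gamma> \<mu> \<nu> :: real and \<psi> :: "real \<Rightarrow> real^2"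
  assumes pos: "\<forall>x. norm (\<psi> x) > 0"
    and notboth: "\<not> (vector [\<epsilon>, \<gamma>] = (0::real^2) \<and> vector [\<mu>, \<nu>] = (0::real^2))"
    and maxcond: "vector [\<epsilon>, \<gamma>] \<noteq> (0::real^2) \<and> vector [\<mu>, \<nu>] \<noteq> (0::real^2)
         \<and> discr \<epsilon> \<gamma> \<mu> \<nu> \<ge> 0 \<and> r_minus \<epsilon> \<gamma> \<mu> \<nu> > 0
       \<longrightarrow> (\<exists>x0. (\<forall>x. (norm (\<psi> x))\<^sup>2 \<le> (norm (\<psi> x0))\<^sup>2)
                  \<and> (norm (\<psi> x0))\<^sup>2 < r_minus \<epsilon> \<gamma> \<mu> \<nu>)"
  shows "\<forall>x. det (Mmat \<epsilon> \<gamma> \<mu> \<nu> (\<psi> x)) > 0"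
proof
  fix x
  define r where "r = (norm (\<psi> x))\<^sup>2"
  have r: "r > 0" using pos unfolding r_def by simp
  have r': "r = (\<psi> x $ 1)\<^sup>2 + (\<psi> x $ 2)\<^sup>2" unfolding r_def nv ..
  have "3*(\<epsilon>\<^sup>2+\<gamma>\<^sup>2) + 8*r*(\<epsilon>*\<mu>+\<gamma>*\<nu>) + 5*r\<^sup>2*(\<mu>\<^sup>2+\<nu>\<^sup>2) > 0"
  proof (rule quad[OF r])
    show "\<not> (\<epsilon> = 0 \<and> \<gamma> = 0 \<and> \<mu> = 0 \<and> \<nu> = 0)" using notboth by (simp add: v0)
    show "\<not>(\<epsilon> = 0 \<and> \<gamma> = 0) \<and> \<not> (\<mu> = 0 \<and> \<nu> = 0) \<and> discr \<epsilon> \<gamma> \<mu> \<nu> \<ge> 0 \<and> r_minus \<epsilon> \<gamma> \<mu> \<nu> > 0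
          \<longrightarrow> r < r_minus \<epsilon> \<gamma> \<mu> \<nu>"
    proof
      assume "\<not>(\<epsilon> = 0 \<and> \<gamma> = 0) \<and> \<not> (\<mu> = 0 \<and> \<nu> = 0) \<and> discr \<epsilon> \<gamma> \<mu> \<nu> \<ge> 0 \<and> r_minus \<epsilon> \<gamma> \<mu> \<nu> > 0"
      then obtain x0 where "\<forall>x. (norm (\<psi> x))\<^sup>2 \<le> (norm (\<psi> x0))\<^sup>2"
          "(norm (\<psi> x0))\<^sup>2 < r_minus \<epsilon> \<gamma> \<mu> \<nu>" using maxcond unfolding v0 by blast
      then show "r < r_minus \<epsilon> \<gamma> \<mu> \<nu>" unfolding r_def by (meson order_le_less_trans)
    qed
  qed
  then show "det (Mmat \<epsilon> \<gamma> \<mu> \<nu> (\<psi> x)) > 0"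
    unfolding detM r'[symmetric] using r by (simp add: mult_pos_pos)
qed

end
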